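(* In the binary setting with $R_p=0$ and $0<\beta<1$, the function $U(s,\cdot)$ restricted to $[0,Q-d_l]$ has at most one local maximum point. Writing $$G(\pi)=\frac{\lambda(\kappa-\pi)^\beta w(p)}{\pi^\beta w(1-p)}\Big(1+\frac{\kappa(d_h-Q)}{(\kappa-\pi)(Q-d_l)}\Big)^{\beta-1},$$ if $G(\pi)<1$ then the maximum of $U(s,\cdot)$ over $[0,Q-d_l]$ is attained at $q_s=Q-d_l$, and if $G(\pi)\ge1$ it is attained at the point $$q_s=\frac{\frac{\kappa}{\kappa-\pi}(d_h-Q)}{\Big(\frac{w(1-p)\pi^\beta}{w(p)\lambda(\kappa-\pi)^\beta}\Big)^{\frac{1}{\beta-1}}-1}\in(0,Q-d_l].$$
   Context: Binary setting: $\kappa>0$, $0<d_l<Q<d_h$, $0<p<1$; the demand equals $d_h$ with probability $p$ and $d_l$ with probability $1-p$. $L(y)=0$ if $y\ge0$, $L(y)=\kappa y$ if $y<0$. Value function $v(x)=x^\beta$ for $x\ge0$, $v(x)=-\lambda(-x)^\beta$ for $x<0$, with $\lambda\ge1$. Weighting $w(q)=\exp(-(-\ln q)^\mu)$, $0<\mu\le1$. Price $\pi=\pi_b^{\max}\in(0,\kappa)$. Seller's utility $U(s,q_s)=w(1-p)\,v\big(\pi q_s+L(Q-q_s-d_l)-R_p\big)+w(p)\,v\big(\pi q_s+L(Q-q_s-d_h)-R_p\big)$ for $q_s\ge0$. *)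

theory Defs
  imports Complex_Main
begin

definition Lpen :: "real \<Rightarrow> real \<Rightarrow> real" where
  "Lpen \<kappa> y = (if y \<ge> 0 then 0 else \<kappa> * y)"

definition vfun :: "real \<Rightarrow> real \<Rightarrow> real \<Rightarrow> real" where
  "vfun lam \<beta> x = (if x \<ge> 0 then x powr \<beta> else - lam * ((- x) powr \<beta>))"

definition wfun :: "real \<Rightarrow> real \<Rightarrow> real" where
  "wfun \<mu> q = exp (- ((- ln q) powr \<mu>))"

definition Useller ::
  "real \<Rightarrow> real \<Rightarrow> real \<Rightarrow> real \<Rightarrow> real \<Rightarrow> real \<Rightarrow> real \<Rightarrow> real \<Rightarrow> real \<Rightarrow> real \<Rightarrow> real \<Rightarrow> real" where
  "Useller \<kappa> lam \<beta> \<mu> p Q dl dh \<pi> Rp qs =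
     wfun \<mu> (1 - p) * vfun lam \<beta> (\<pi> * qs + Lpen \<kappa> (Q - qs - dl) - Rp)
   + wfun \<mu> p * vfun lam \<beta> (\<pi> * qs + Lpen \<kappa> (Q - qs - dh) - Rp)"

definition local_max_on :: "real set \<Rightarrow> (real \<Rightarrow> real) \<Rightarrow> real \<Rightarrow> bool" where
  "local_max_on S f x \<longleftrightarrow> x \<in> S \<and> (\<exists>e>0. \<forall>y\<in>S. \<bar>y - x\<bar> < e \<longrightarrow> f y \<le> f x)"

end

theory Submission imports Defs begin

lemma fderiv:
  fixes A B c k s \<beta> q :: real
  assumes "B > 0" "k > 0" "c > 0" "s > 0" "0 < \<beta>" "\<beta> < 1"
    "A = B * k powr \<beta> * s powr (\<beta> - 1)" "q > 0"
  shows "((\<lambda>q. A * q powr \<beta> - B * (c + k*q) powr \<beta>) has_real_derivative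
          B*\<beta>*k*((k*s*q) powr (\<beta>-1) - (c+k*q) powr (\<beta>-1))) (at q)"
proof -
  have d1: "((\<lambda>q. q powr \<beta>) has_real_derivative \<beta> * q powr (\<beta> - 1)) (at q)"
    using has_real_derivative_powr[OF assms(8)] .
  have cq: "c + k*q > 0" using assms by (simp add: add_pos_pos)
  have d2: "((\<lambda>q. (c + k*q) powr \<beta>) has_real_derivative k * (\<beta> * (c+k*q) powr (\<beta> - 1))) (at q)"
  proof -
    have "((\<lambda>q. c + k*q) has_real_derivative k) (at q)"
      by (auto intro!: derivative_eq_intros)
    from DERIV_chain2[OF has_real_derivative_powr[OF cq] this] show ?thesis by (simp add: mult.commute)
  qed
  have d: "((\<lambda>q. A * q powr \<beta> - B * (c + k*q) powr \<beta>) has_real_derivative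
          A * (\<beta> * q powr (\<beta> - 1)) - B * (k * (\<beta> * (c+k*q) powr (\<beta> - 1)))) (at q)"
    by (intro DERIV_diff DERIV_cmult d1 d2)
  have kk: "k * k powr (\<beta> - 1) = k powr \<beta>"
    using assms(2) by (simp add: powr_add[symmetric] powr_mult_base)
  have "A * (\<beta> * q powr (\<beta> - 1)) = B*\<beta>*k*((k*s*q) powr (\<beta>-1))"
    using assms kk by (simp add: powr_mult algebra_simps)
  then have e: "A * (\<beta> * q powr (\<beta> - 1)) - B * (k * (\<beta> * (c+k*q) powr (\<beta> - 1)))
     = B*\<beta>*k*((k*s*q) powr (\<beta>-1) - (c+k*q) powr (\<beta>-1))" by (simp add: algebra_simps)
  show ?thesis using d unfolding e .
qed

lemma fcont:
  fixes A B c k \<beta> x y :: real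
  assumes "k > 0" "c > 0" "0 < \<beta>" "0 \<le> x"
  shows "continuous_on {x..y} (\<lambda>q. A * q powr \<beta> - B * (c + k*q) powr \<beta>)"
proof -
  have "continuous_on {x..y} (\<lambda>q. q powr \<beta>)"
    by (rule continuous_on_powr') (use assms in \<open>auto intro: continuous_intros\<close>)
  moreover have "continuous_on {x..y} (\<lambda>q. (c + k*q) powr \<beta>)"
  proof (rule continuous_on_powr)
    show "\<forall>q\<in>{x..y}. c + k * q \<noteq> 0" using assms
      by (auto simp: add_pos_nonneg) (metis add_pos_nonneg less_numeral_extra(3) mult_nonneg_nonneg order_less_le order_trans)
  qed (auto intro: continuous_intros)
  ultimately show ?thesis by (intro continuous_on_diff continuous_on_mult_left)
qed

lemma finc:
  fixes A B c k s \<beta> x y :: real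
  assumes "B > 0" "k > 0" "c > 0" "s > 0" "0 < \<beta>" "\<beta> < 1"
    "A = B * k powr \<beta> * s powr (\<beta> - 1)" "0 \<le> x" "x < y"
    "\<And>q. x < q \<Longrightarrow> q < y \<Longrightarrow> k*s*q < c + k*q"
  shows "A * x powr \<beta> - B * (c + k*x) powr \<beta> < A * y powr \<beta> - B * (c + k*y) powr \<beta>"
proof -
  have "(\<lambda>q. A * q powr \<beta> - B * (c + k*q) powr \<beta>) x < (\<lambda>q. A * q powr \<beta> - B * (c + k*q) powr \<beta>) y"
  proof (rule DERIV_pos_imp_increasing_open[OF assms(9)])
    fix q assume q: "x < q" "q < y"
    have qp: "q > 0" using q assms by linarith
    have lt: "(c+k*q) powr (\<beta>-1) < (k*s*q) powr (\<beta>-1)"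
      by (rule powr_less_mono2_neg) (use assms q qp in auto)
    show "\<exists>y. ((\<lambda>q. A * q powr \<beta> - B * (c + k*q) powr \<beta>) has_real_derivative y) (at q) \<and> y > 0"
      apply (rule exI[of _ "B*\<beta>*k*((k*s*q) powr (\<beta>-1) - (c+k*q) powr (\<beta>-1))"])
      using fderiv[OF assms(1-7) qp] assms lt by auto
  next
    show "continuous_on {x..y} (\<lambda>q. A * q powr \<beta> - B * (c + k*q) powr \<beta>)"
      using fcont assms by blast
  qed
  then show ?thesis by simp
qed

lemma fdec:
  fixes A B c k s \<beta> x y :: real
  assumes "B > 0" "k > 0" "c > 0" "s > 0" "0 < \<beta>" "\<beta> < 1"
    "A = B * k powr \<beta> * s powr (\<beta> - 1)" "0 \<le> x" "x < y"
    "\<And>q. x < q \<Longrightarrow> q < y \<Longrightarrow> k*s*q > c + k*q"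
  shows "A * x powr \<beta> - B * (c + k*x) powr \<beta> > A * y powr \<beta> - B * (c + k*y) powr \<beta>"
proof -
  have "(\<lambda>q. A * q powr \<beta> - B * (c + k*q) powr \<beta>) x > (\<lambda>q. A * q powr \<beta> - B * (c + k*q) powr \<beta>) y"
  proof (rule DERIV_neg_imp_decreasing_open[OF assms(9)])
    fix q assume q: "x < q" "q < y"
    have qp: "q > 0" using q assms by linarith
    have lt: "(k*s*q) powr (\<beta>-1) < (c+k*q) powr (\<beta>-1)"
      by (rule powr_less_mono2_neg) (use assms q qp in \<open>auto simp: add_pos_pos\<close>)
    show "\<exists>y. ((\<lambda>q. A * q powr \<beta> - B * (c + k*q) powr \<beta>) has_real_derivative y) (at q) \<and> y < 0"
      apply (rule exI[of _ "B*\<beta>*k*((k*s*q) powr (\<beta>-1) - (c+k*q) powr (\<beta>-1))"])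
      using fderiv[OF assms(1-7) qp] assms lt by (auto simp: mult_pos_neg)
  next
    show "continuous_on {x..y} (\<lambda>q. A * q powr \<beta> - B * (c + k*q) powr \<beta>)"
      using fcont assms by blast
  qed
  then show ?thesis by simp
qed

lemma powr_neg_less_iff:
  fixes x y e :: real
  assumes "e < 0" "x > 0" "y > 0"
  shows "x powr e < y powr e \<longleftrightarrow> y < x"
  by (metis assms powr_less_mono2_neg linorder_neqE_linordered_idom order_less_asym order_less_irrefl)

theorem mainTheorem5:
  fixes \<kappa> lam \<beta> \<mu> p Q dl dh \<pi> :: real
  assumes "\<kappa> > 0" and "0 < dl" and "dl < Q" and "Q < dh"
    and "0 < p" and "p < 1" and "lam \<ge> 1" and "0 < \<mu>" and "\<mu> \<le> 1"
    and "0 < \<pi>" and "\<pi> < \<kappa>" and "0 < \<beta>" and "\<beta> < 1"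
  defines "U \<equiv> Useller \<kappa> lam \<beta> \<mu> p Q dl dh \<pi> 0"
    and "G \<equiv> (lam * (\<kappa> - \<pi>) powr \<beta> * wfun \<mu> p) / (\<pi> powr \<beta> * wfun \<mu> (1 - p))
             * (1 + \<kappa> * (dh - Q) / ((\<kappa> - \<pi>) * (Q - dl))) powr (\<beta> - 1)"
    and "qstar \<equiv> (\<kappa> / (\<kappa> - \<pi>) * (dh - Q)) /
             ((wfun \<mu> (1 - p) * \<pi> powr \<beta> / (wfun \<mu> p * lam * (\<kappa> - \<pi>) powr \<beta>))
                powr (1 / (\<beta> - 1)) - 1)"
  shows "(\<forall>x y. local_max_on {0..Q - dl} U x \<and> local_max_on {0..Q - dl} U y \<longrightarrow> x = y)
       \<and> (G < 1 \<longrightarrow> (\<forall>q\<in>{0..Q - dl}. U q \<le> U (Q - dl)))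
       \<and> (G \<ge> 1 \<longrightarrow> qstar \<in> {0<..Q - dl} \<and> (\<forall>q\<in>{0..Q - dl}. U q \<le> U qstar))"
  proof -
  define a where "a = wfun \<mu> (1 - p)"
  define b where "b = wfun \<mu> p"
  define k where "k = \<kappa> - \<pi>"
  define c where "c = \<kappa> * (dh - Q)"
  define m where "m = Q - dl"
  define A where "A = a * \<pi> powr \<beta>"
  define B where "B = b * lam"
  define r where "r = A / (B * k powr \<beta>)"
  define s where "s = r powr (1 / (\<beta> - 1))"
  define f where "f = (\<lambda>q. A * q powr \<beta> - B * (c + k*q) powr \<beta>)"
  have a0: "a > 0" unfolding a_def wfun_def by simp
  have b0: "b > 0" unfolding b_def wfun_def by simp
  have k0: "k > 0" and c0: "c > 0" and m0: "m > 0"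
    using assms unfolding k_def c_def m_def by auto
  have A0: "A > 0" using a0 assms unfolding A_def by simp
  have B0: "B > 0" using b0 assms unfolding B_def by simp
  have r0: "r > 0" using A0 B0 k0 unfolding r_def by simp
  have s0: "s > 0" using r0 unfolding s_def by simp
  have sr: "s powr (\<beta> - 1) = r"
    using r0 assms unfolding s_def by (simp add: powr_powr)
  have Aeq: "A = B * k powr \<beta> * s powr (\<beta> - 1)"
    using B0 k0 unfolding sr r_def by simp
  have Uf: "U q = f q" if q: "q \<in> {0..m}" for q
  proof -
    have l1: "Lpen \<kappa> (Q - q - dl) = 0" using q unfolding m_def Lpen_def by auto
    have l2: "Lpen \<kappa> (Q - q - dh) = \<kappa> * (Q - q - dh)" using q assms unfolding m_def Lpen_def by auto
    have e2: "\<pi> * q + \<kappa> * (Q - q - dh) - 0 = - (c + k*q)" unfolding c_def k_def by (simp add: algebra_simps)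
    have ck: "c + k*q > 0" using c0 k0 q by (simp add: add_pos_nonneg)
    have v1: "vfun lam \<beta> (\<pi> * q + 0 - 0) = \<pi> powr \<beta> * q powr \<beta>"
      using q assms unfolding vfun_def by (simp add: powr_mult)
    have v2: "vfun lam \<beta> (- (c + k*q)) = - lam * (c + k*q) powr \<beta>"
      using ck unfolding vfun_def by (simp, metis add.commute)
    show ?thesis unfolding U_def Useller_def l1 l2 e2 v1 v2 f_def A_def B_def a_def b_def
      by (simp add: algebra_simps)
  qed
  have Geq: "G = (1 + c / (k * m)) powr (\<beta> - 1) / s powr (\<beta> - 1)"
    unfolding G_def sr r_def A_def B_def a_def b_def c_def k_def m_def
    using a0 b0 assms unfolding a_def b_def by (simp add: field_simps)
  have cm: "1 + c / (k*m) > 0" using c0 k0 m0 by (simp add: add_pos_pos)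
  have G1: "G < 1 \<longleftrightarrow> k*s*m < k*m + c"
  proof -
    have "G < 1 \<longleftrightarrow> (1 + c / (k * m)) powr (\<beta> - 1) < s powr (\<beta> - 1)"
      unfolding Geq using s0 by (simp add: divide_less_eq)
    also have "\<dots> \<longleftrightarrow> s < 1 + c / (k*m)"
      by (rule powr_neg_less_iff) (use assms s0 cm in auto)
    also have "\<dots> \<longleftrightarrow> k*s*m < k*m + c"
      using k0 m0 by (simp add: field_simps)
    finally show ?thesis .
  qed
  have qs: "qstar = c / (k * (s - 1))"
    unfolding qstar_def s_def r_def A_def B_def a_def b_def c_def k_def
    using assms by (simp add: field_simps)
  define p0 where "p0 = (if k*s*m < k*m + c then m else c / (k * (s - 1)))"
  have p0pos: "0 < p0" and p0m: "p0 \<le> m"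
    and below: "\<And>q. 0 \<le> q \<Longrightarrow> q < p0 \<Longrightarrow> k*s*q < c + k*q"
    and above: "\<And>q. p0 < q \<Longrightarrow> q \<le> m \<Longrightarrow> k*s*q > c + k*q"
  proof -
    have "0 < p0 \<and> p0 \<le> m \<and> (\<forall>q. 0 \<le> q \<longrightarrow> q < p0 \<longrightarrow> k*s*q < c + k*q)
        \<and> (\<forall>q. p0 < q \<longrightarrow> q \<le> m \<longrightarrow> k*s*q > c + k*q)"
    proof (cases "k*s*m < k*m + c")
      case True
      have "k*s*q < c + k*q" if "0 \<le> q" "q < m" for q
      proof (cases "s \<le> 1")
        case True
        have "k*s*q \<le> k*q" using True that k0 mult_right_mono[of s 1 q] by (simp add: mult_left_mono)
        then show ?thesis using c0 by linarith
      next
        case False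
        have "k*(s-1)*q < k*(s-1)*m" using False that k0 by simp
        then show ?thesis using \<open>k*s*m < k*m + c\<close> by (simp add: algebra_simps)
      qed
      then show ?thesis using True m0 unfolding p0_def by auto
    next
      case False
      have ks: "k * (s - 1) > 0"
      proof -
        have "k*m*(s-1) \<ge> c" using False by (simp add: algebra_simps)
        then have "k*m*(s-1) > 0" using c0 by linarith
        then show ?thesis using k0 m0 mult_pos_pos[OF k0 m0] by (auto simp: zero_less_mult_iff)
      qed
      have p: "p0 = c / (k*(s-1))" using False unfolding p0_def by simp
      have "c / (k*(s-1)) \<le> m" using ks False by (simp add: divide_le_eq algebra_simps)
      moreover have "k*s*q < c + k*q" if "q < c / (k*(s-1))" for q
        using that ks by (simp add: less_divide_eq algebra_simps)
      moreover have "k*s*q > c + k*q" if "q > c / (k*(s-1))" for q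
        using that ks by (simp add: divide_less_eq algebra_simps)
      ultimately show ?thesis unfolding p using c0 ks by auto
    qed
    then show "0 < p0" "p0 \<le> m" "\<And>q. 0 \<le> q \<Longrightarrow> q < p0 \<Longrightarrow> k*s*q < c + k*q"
      "\<And>q. p0 < q \<Longrightarrow> q \<le> m \<Longrightarrow> k*s*q > c + k*q" by auto
  qed
  have inc: "f x < f y" if "0 \<le> x" "x < y" "y \<le> p0" for x y
    unfolding f_def
    by (rule finc[OF B0 k0 c0 s0 assms(12,13) Aeq that(1,2)]) (use that below in auto)
  have dec: "f x > f y" if "p0 \<le> x" "x < y" "y \<le> m" for x y
    unfolding f_def
    by (rule fdec[OF B0 k0 c0 s0 assms(12,13) Aeq _ that(2)]) (use that above p0pos in auto)
  have fmax: "f q \<le> f p0" if "q \<in> {0..m}" for q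
  proof -
    consider "q < p0" | "q = p0" | "q > p0" by linarith
    then show ?thesis
    proof cases
      case 1 then show ?thesis using inc[of q p0] that by auto
    next
      case 3 then show ?thesis using dec[of p0 q] that by auto
    qed simp
  qed
  have Umax: "U q \<le> U p0" if "q \<in> {0..m}" for q
    using fmax[OF that] Uf[OF that] Uf[of p0] p0pos p0m by auto
  have uniq: "x = p0" if lm: "local_max_on {0..m} U x" for x
  proof -
    obtain e where e: "e > 0" and xm: "x \<in> {0..m}"
      and h: "\<And>y. y \<in> {0..m} \<Longrightarrow> \<bar>y - x\<bar> < e \<Longrightarrow> U y \<le> U x"
      using lm unfolding local_max_on_def by blast
    show ?thesis
    proof (rule ccontr)
      assume "x \<noteq> p0"
      then consider "x < p0" | "x > p0" by linarith
      then show False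
      proof cases
        case 1
        define y where "y = min (x + e/2) p0"
        have y: "y \<in> {0..m}" "\<bar>y - x\<bar> < e" "x < y" "y \<le> p0"
          using 1 e xm p0m unfolding y_def by auto
        have "f x < f y" using inc[of x y] y xm by auto
        then show False using h[OF y(1,2)] Uf[OF y(1)] Uf[OF xm] by auto
      next
        case 2
        define y where "y = max (x - e/2) p0"
        have y: "y \<in> {0..m}" "\<bar>y - x\<bar> < e" "y < x" "p0 \<le> y"
          using 2 e xm p0pos unfolding y_def by auto
        have "f x < f y" using dec[of y x] y xm by auto
        then show False using h[OF y(1,2)] Uf[OF y(1)] Uf[OF xm] by auto
      qed
    qed
  qed
  show ?thesis
  proof (intro conjI impI allI)
    fix x y assume "local_max_on {0..Q - dl} U x \<and> local_max_on {0..Q - dl} U y"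
    then show "x = y" using uniq unfolding m_def by auto
  next
    assume "G < 1"
    then have "p0 = m" using G1 unfolding p0_def by simp
    then show "\<forall>q\<in>{0..Q - dl}. U q \<le> U (Q - dl)" using Umax unfolding m_def by auto
  next
    assume "G \<ge> 1"
    then have "p0 = qstar" using G1 qs unfolding p0_def by simp
    then show "qstar \<in> {0<..Q - dl}" "\<forall>q\<in>{0..Q - dl}. U q \<le> U qstar"
      using Umax p0pos p0m unfolding m_def by auto
  qed
qed

end
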